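(* Let $G=(V,w,m)$ be a locally finite measured weighted graph, let $x_0\neq y_0\in V$ with $d(x_0,y_0)<\infty$, and let $\varepsilon>0$ be such that $d(x_0,y_0)\,\kappa(x_0,y_0)\le\varepsilon$. Then there exists an optimal transport plan $\rho:B_1(x_0)\times B_1(y_0)\to[0,\infty)$ for the pair $(x_0,y_0)$ such that $$\sum_{\substack{x\in B_1(x_0),\ y\in B_1(y_0)\\ d(x,y)>d(x_0,y_0)}}\rho(x,y)\ \ge\ \frac{q_{\min}-\varepsilon}{2},$$ where $q_{\min}:=\inf_{x\sim y}q(x,y)$.
   Context: A measured weighted graph $G=(V,w,m)$ consists of a countable set $V$, a symmetric $w:V\times V\to[0,\infty)$ vanishing on the diagonal, and $m:V\to(0,\infty)$; $x\sim y$ iff $w(x,y)>0$; locally finite means each vertex has finitely many neighbours. $q(x,y):=w(x,y)/m(x)$, $\Delta f(x):=\sum_y q(x,y)(f(y)-f(x))$. $d$ is the combinatorial graph distance, $B_1(x)=\{z:d(x,z)\le1\}$, $S_1(x)=\{z:d(x,z)=1\}$. For $x\ne y$, $\nabla_{xy}f:=(f(x)-f(y))/d(x,y)$, $\|\nabla f\|_\infty:=\sup_{x\sim y}\nabla_{xy}f$, and the Ollivier curvature is $\kappa(x,y):=\inf\{\nabla_{xy}\Delta f: \nabla_{yx}f=1,\ \|\nabla f\|_\infty=1\}$. A transport plan for $(x_0,y_0)$ is any $\rho:B_1(x_0)\times B_1(y_0)\to[0,\infty)$ with $\sum_{y\in B_1(y_0)}\rho(x,y)=q(x_0,x)$ for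 all $x\in S_1(x_0)$ and $\sum_{x\in B_1(x_0)}\rho(x,y)=q(y_0,y)$ for all $y\in S_1(y_0)$ (no condition is imposed at $x_0$ or $y_0$, and $\rho$ need not be a probability measure). It is known that $\kappa(x_0,y_0)=\sup_\rho\sum_{x,y}\rho(x,y)\big[1-\frac{d(x,y)}{d(x_0,y_0)}\big]$ over all transport plans; a transport plan attaining this supremum is called optimal. *)

theory Defs
  imports "HOL-Analysis.Analysis" "HOL-Library.Extended_Nat" "HOL-Library.Extended_Real"
begin

text \<open>Measured weighted graph on the countable vertex type 'a (V = UNIV).\<close>

definition measured_graph :: "('a \<Rightarrow> 'a \<Rightarrow> real) \<Rightarrow> ('a \<Rightarrow> real) \<Rightarrow> bool" where
  "measured_graph w m \<longleftrightarrow> (\<forall>x y. w x y = w y x) \<and> (\<forall>x y. 0 \<le> w x y) \<and>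
     (\<forall>x. w x x = 0) \<and> (\<forall>x. 0 < m x)"

definition adj :: "('a \<Rightarrow> 'a \<Rightarrow> real) \<Rightarrow> 'a \<Rightarrow> 'a \<Rightarrow> bool" where
  "adj w x y \<longleftrightarrow> 0 < w x y"

definition locally_finite :: "('a \<Rightarrow> 'a \<Rightarrow> real) \<Rightarrow> bool" where
  "locally_finite w \<longleftrightarrow> (\<forall>x. finite {y. adj w x y})"

definition qw :: "('a \<Rightarrow> 'a \<Rightarrow> real) \<Rightarrow> ('a \<Rightarrow> real) \<Rightarrow> 'a \<Rightarrow> 'a \<Rightarrow> real" where
  "qw w m x y = w x y / m x"

definition laplacian :: "('a \<Rightarrow> 'a \<Rightarrow> real) \<Rightarrow> ('a \<Rightarrow> real) \<Rightarrow> ('a \<Rightarrow> real) \<Rightarrow> 'a \<Rightarrow> real" where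
  "laplacian w m f x = (\<Sum>y\<in>{y. adj w x y}. qw w m x y * (f y - f x))"

definition gdist :: "('a \<Rightarrow> 'a \<Rightarrow> real) \<Rightarrow> 'a \<Rightarrow> 'a \<Rightarrow> enat" where
  "gdist w x y = (INF n\<in>{n. (adj w ^^ n) x y}. enat n)"

definition ball1 :: "('a \<Rightarrow> 'a \<Rightarrow> real) \<Rightarrow> 'a \<Rightarrow> 'a set" where
  "ball1 w x = {z. gdist w x z \<le> 1}"

definition sphere1 :: "('a \<Rightarrow> 'a \<Rightarrow> real) \<Rightarrow> 'a \<Rightarrow> 'a set" where
  "sphere1 w x = {z. gdist w x z = 1}"

text \<open>Gradient, only used for pairs at finite distance.\<close>
definition grad :: "('a \<Rightarrow> 'a \<Rightarrow> real) \<Rightarrow> ('a \<Rightarrow> real) \<Rightarrow> 'a \<Rightarrow> 'a \<Rightarrow> real" where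
  "grad w f x y = (f x - f y) / real (the_enat (gdist w x y))"

definition grad_sup :: "('a \<Rightarrow> 'a \<Rightarrow> real) \<Rightarrow> ('a \<Rightarrow> real) \<Rightarrow> ereal" where
  "grad_sup w f = (SUP p\<in>{(x, y). adj w x y}. ereal (grad w f (fst p) (snd p)))"

definition ollivier :: "('a \<Rightarrow> 'a \<Rightarrow> real) \<Rightarrow> ('a \<Rightarrow> real) \<Rightarrow> 'a \<Rightarrow> 'a \<Rightarrow> ereal" where
  "ollivier w m x0 y0 = Inf {ereal (grad w (laplacian w m f) x0 y0) | f.
      grad w f y0 x0 = 1 \<and> grad_sup w f = 1}"

definition transport_plan ::
  "('a \<Rightarrow> 'a \<Rightarrow> real) \<Rightarrow> ('a \<Rightarrow> real) \<Rightarrow> 'a \<Rightarrow> 'a \<Rightarrow> ('a \<Rightarrow> 'a \<Rightarrow> real) \<Rightarrow> bool" where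
  "transport_plan w m x0 y0 \<rho> \<longleftrightarrow>
     (\<forall>x\<in>ball1 w x0. \<forall>y\<in>ball1 w y0. 0 \<le> \<rho> x y) \<and>
     (\<forall>x\<in>sphere1 w x0. (\<Sum>y\<in>ball1 w y0. \<rho> x y) = qw w m x0 x) \<and>
     (\<forall>y\<in>sphere1 w y0. (\<Sum>x\<in>ball1 w x0. \<rho> x y) = qw w m y0 y)"

definition plan_value :: "('a \<Rightarrow> 'a \<Rightarrow> real) \<Rightarrow> 'a \<Rightarrow> 'a \<Rightarrow> ('a \<Rightarrow> 'a \<Rightarrow> real) \<Rightarrow> real" where
  "plan_value w x0 y0 \<rho> = (\<Sum>p\<in>ball1 w x0 \<times> ball1 w y0.
      \<rho> (fst p) (snd p) * (1 - real (the_enat (gdist w (fst p) (snd p)))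
                                / real (the_enat (gdist w x0 y0))))"

definition optimal_plan ::
  "('a \<Rightarrow> 'a \<Rightarrow> real) \<Rightarrow> ('a \<Rightarrow> real) \<Rightarrow> 'a \<Rightarrow> 'a \<Rightarrow> ('a \<Rightarrow> 'a \<Rightarrow> real) \<Rightarrow> bool" where
  "optimal_plan w m x0 y0 \<rho> \<longleftrightarrow> transport_plan w m x0 y0 \<rho> \<and>
     (\<forall>\<rho>'. transport_plan w m x0 y0 \<rho>' \<longrightarrow> plan_value w x0 y0 \<rho>' \<le> plan_value w x0 y0 \<rho>)"

definition qmin :: "('a \<Rightarrow> 'a \<Rightarrow> real) \<Rightarrow> ('a \<Rightarrow> real) \<Rightarrow> real" where
  "qmin w m = Inf {qw w m x y | x y. adj w x y}"

end

theory Submission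
  imports Defs
begin


lemma adj_sym: "measured_graph w m \<Longrightarrow> adj w x y = adj w y x"
  by (simp add: measured_graph_def adj_def)

lemma adj_irrefl: "measured_graph w m \<Longrightarrow> \<not> adj w x x"
  by (simp add: measured_graph_def adj_def)

lemma relpowp_sym: "(\<And>x y. R x y \<Longrightarrow> R y x) \<Longrightarrow> (R ^^ n) x y \<Longrightarrow> (R ^^ n) y x"
proof (induction n arbitrary: x y)
  case 0 then show ?case by simp
next
  case (Suc n)
  from Suc.prems(2) obtain z where "(R ^^ n) x z" "R z y" by (rule relpowp_Suc_E)
  then show ?case using Suc by (meson relpowp_Suc_I2)
qed

lemma gdist_le: "(adj w ^^ n) x y \<Longrightarrow> gdist w x y \<le> enat n"
  unfolding gdist_def by (rule INF_lower) simp

lemma gdist_path: assumes "gdist w x y = enat n" shows "(adj w ^^ n) x y"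
proof -
  have ne: "{n. (adj w ^^ n) x y} \<noteq> {}"
  proof
    assume "{n. (adj w ^^ n) x y} = {}"
    then have "gdist w x y = \<infinity>" unfolding gdist_def by (simp add: top_enat_def)
    with assms show False by simp
  qed
  then obtain k where k: "(adj w ^^ k) x y" by auto
  define l where "l = (LEAST n. (adj w ^^ n) x y)"
  have l: "(adj w ^^ l) x y" unfolding l_def using k by (rule LeastI)
  have "gdist w x y = enat l"
  proof (rule antisym)
    show "gdist w x y \<le> enat l" using l by (rule gdist_le)
    show "enat l \<le> gdist w x y" unfolding gdist_def
      by (rule INF_greatest) (auto simp: l_def intro: Least_le)
  qed
  with assms l show ?thesis by simp
qed

lemma gdist_sym: assumes "measured_graph w m" shows "gdist w x y = gdist w y x"
proof -
  have sy: "\<And>a b. adj w a b \<Longrightarrow> adj w b a" using adj_sym[OF assms] by blast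
  have "(adj w ^^ n) x y \<longleftrightarrow> (adj w ^^ n) y x" for n
    using relpowp_sym[of "adj w", OF sy] by blast
  then have "{n. (adj w ^^ n) x y} = {n. (adj w ^^ n) y x}" by blast
  then show ?thesis unfolding gdist_def by simp
qed

lemma gdist_refl: "gdist w x x = 0"
proof -
  have "gdist w x x \<le> enat 0" by (rule gdist_le) simp
  then show ?thesis by (simp add: zero_enat_def[symmetric])
qed

lemma gdist_trans: assumes "gdist w x y = enat a" "gdist w y z = enat b"
  shows "gdist w x z \<le> enat (a + b)"
proof -
  have "(adj w ^^ (a + b)) x z" unfolding relpowp_add
    using gdist_path[OF assms(1)] gdist_path[OF assms(2)] by blast
  then show ?thesis by (rule gdist_le)
qed

lemma gdist_one_iff: assumes "measured_graph w m" shows "gdist w x y = 1 \<longleftrightarrow> adj w x y"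
proof
  assume "gdist w x y = 1"
  then have "(adj w ^^ 1) x y" using gdist_path[of w x y 1] by (simp add: one_enat_def)
  then show "adj w x y" by (auto simp: relcompp_apply)
next
  assume a: "adj w x y"
  then have "(adj w ^^ 1) x y" unfolding relpowp_1 .
  then have le: "gdist w x y \<le> enat 1" by (rule gdist_le)
  have "x \<noteq> y" using a adj_irrefl[OF assms] by blast
  have "gdist w x y \<noteq> 0"
  proof
    assume "gdist w x y = 0"
    then have "(adj w ^^ 0) x y" using gdist_path[of w x y 0] by (simp add: zero_enat_def)
    with \<open>x \<noteq> y\<close> show False by simp
  qed
  with le show "gdist w x y = 1"
    by (cases "gdist w x y") (auto simp: one_enat_def zero_enat_def)
qed

lemma sphere1_eq: "measured_graph w m \<Longrightarrow> sphere1 w x = {y. adj w x y}"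
  unfolding sphere1_def using gdist_one_iff[of w m x] by simp


lemma ball1_eq: assumes "measured_graph w m" shows "ball1 w x = insert x {y. adj w x y}"
proof -
  have "gdist w x z \<le> 1 \<longleftrightarrow> z = x \<or> adj w x z" for z
  proof
    assume a: "gdist w x z \<le> 1"
    then have "gdist w x z = 0 \<or> gdist w x z = 1"
      by (cases "gdist w x z") (auto simp: one_enat_def zero_enat_def)
    then show "z = x \<or> adj w x z"
    proof
      assume "gdist w x z = 0"
      then have "(adj w ^^ 0) x z" using gdist_path[of w x z 0] by (simp add: zero_enat_def)
      then show ?thesis by simp
    next
      assume "gdist w x z = 1"
      then show ?thesis using gdist_one_iff[OF assms] by simp
    qed
  next
    assume "z = x \<or> adj w x z"
    then show "gdist w x z \<le> 1"
    proof
      assume "z = x" then show ?thesis by (simp add: gdist_refl)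
    next
      assume "adj w x z" then have "gdist w x z = 1" using gdist_one_iff[OF assms] by simp
      then show ?thesis by simp
    qed
  qed
  then show ?thesis unfolding ball1_def by auto
qed

lemma lip_step:
  assumes mg: "measured_graph w m" and gs: "grad_sup w f \<le> 1" and a: "adj w u v"
  shows "f u - f v \<le> 1"
proof -
  have "ereal (grad w f u v) \<le> grad_sup w f"
    unfolding grad_sup_def using a
    by (intro SUP_upper2[of "(u, v)"]) auto
  then have "ereal (grad w f u v) \<le> 1" using gs by (rule order_trans)
  then have "ereal (grad w f u v) \<le> ereal 1" by (simp add: one_ereal_def)
  then have "grad w f u v \<le> 1" by simp
  moreover have "gdist w u v = 1" using gdist_one_iff[OF mg] a by simp
  ultimately show ?thesis by (simp add: grad_def one_enat_def)
qed

lemma lip_path: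
  assumes mg: "measured_graph w m" and gs: "grad_sup w f \<le> 1"
  shows "(adj w ^^ n) x y \<Longrightarrow> f y - f x \<le> real n"
proof (induction n arbitrary: y)
  case 0 then show ?case by simp
next
  case (Suc n)
  from Suc.prems obtain z where z: "(adj w ^^ n) x z" "adj w z y" by (rule relpowp_Suc_E)
  have "adj w y z" using z(2) adj_sym[OF mg] by blast
  then have "f y - f z \<le> 1" by (rule lip_step[OF mg gs])
  with Suc.IH[OF z(1)] show ?case by simp
qed

lemma lip:
  assumes mg: "measured_graph w m" and gs: "grad_sup w f \<le> 1" and g: "gdist w x y = enat n"
  shows "f y - f x \<le> real n"
  using lip_path[OF mg gs gdist_path[OF g]] .

lemma enat_le_ex: "e \<le> enat k \<Longrightarrow> \<exists>n. e = enat n \<and> n \<le> k"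
  by (cases e) auto

lemma ball_dist:
  assumes mg: "measured_graph w m" and gd: "gdist w x0 y0 = enat d0"
    and x: "x \<in> ball1 w x0" and y: "y \<in> ball1 w y0"
  shows "\<exists>n. gdist w x y = enat n \<and> n \<le> d0 + 2"
proof -
  have "\<exists>a. gdist w x x0 = enat a \<and> a \<le> 1"
  proof (cases "x = x0")
    case True then show ?thesis by (intro exI[of _ 0]) (simp add: gdist_refl zero_enat_def)
  next
    case False
    then have "adj w x0 x" using x ball1_eq[OF mg] by auto
    then have "adj w x x0" using adj_sym[OF mg] by blast
    then have "gdist w x x0 = 1" using gdist_one_iff[OF mg] by simp
    then show ?thesis by (intro exI[of _ 1]) (simp add: one_enat_def)
  qed
  then obtain a where a: "gdist w x x0 = enat a" "a \<le> 1" by blast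
  have "\<exists>b. gdist w y0 y = enat b \<and> b \<le> 1"
  proof (cases "y = y0")
    case True then show ?thesis by (intro exI[of _ 0]) (simp add: gdist_refl zero_enat_def)
  next
    case False
    then have "adj w y0 y" using y ball1_eq[OF mg] by auto
    then have "gdist w y0 y = 1" using gdist_one_iff[OF mg] by simp
    then show ?thesis by (intro exI[of _ 1]) (simp add: one_enat_def)
  qed
  then obtain b where b: "gdist w y0 y = enat b" "b \<le> 1" by blast
  obtain c where c: "gdist w x y0 = enat c" "c \<le> a + d0"
    using enat_le_ex[OF gdist_trans[OF a(1) gd]] by blast
  obtain n where n: "gdist w x y = enat n" "n \<le> c + b"
    using enat_le_ex[OF gdist_trans[OF c(1) b(1)]] by blast
  show ?thesis using n a b c by (intro exI[of _ n]) simp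
qed

lemma ball_finite: "measured_graph w m \<Longrightarrow> locally_finite w \<Longrightarrow> finite (ball1 w x)"
  using ball1_eq[of w m x] by (simp add: locally_finite_def)

lemma weak_duality:
  assumes mg: "measured_graph w m" and lf: "locally_finite w"
    and tp: "transport_plan w m x0 y0 \<rho>" and gd: "gdist w x0 y0 = enat d0" and d0: "d0 > 0"
    and fy: "grad w f y0 x0 = 1" and gs: "grad_sup w f = 1"
  shows "plan_value w x0 y0 \<rho> \<le> grad w (laplacian w m f) x0 y0"
proof -
  define A where "A = {y. adj w x0 y}"
  define A' where "A' = {y. adj w y0 y}"
  define B where "B = ball1 w x0 \<times> ball1 w y0"
  have B0: "ball1 w x0 = insert x0 A" unfolding A_def by (rule ball1_eq[OF mg])
  have B0': "ball1 w y0 = insert y0 A'" unfolding A'_def by (rule ball1_eq[OF mg])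
  have fA: "finite A" "finite A'" using lf unfolding A_def A'_def locally_finite_def by auto
  have nA: "x0 \<notin> A" "y0 \<notin> A'" unfolding A_def A'_def using adj_irrefl[OF mg] by auto
  have S0: "sphere1 w x0 = A" "sphere1 w y0 = A'" unfolding A_def A'_def using sphere1_eq[OF mg] by auto
  have nn: "\<And>x y. x \<in> ball1 w x0 \<Longrightarrow> y \<in> ball1 w y0 \<Longrightarrow> 0 \<le> \<rho> x y"
    using tp unfolding transport_plan_def by blast
  have row: "\<And>x. x \<in> A \<Longrightarrow> (\<Sum>y\<in>ball1 w y0. \<rho> x y) = qw w m x0 x"
    using tp S0 unfolding transport_plan_def by blast
  have col: "\<And>y. y \<in> A' \<Longrightarrow> (\<Sum>x\<in>ball1 w x0. \<rho> x y) = qw w m y0 y"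
    using tp S0 unfolding transport_plan_def by blast
  have fb: "finite (ball1 w x0)" "finite (ball1 w y0)" using ball_finite[OF mg lf] by auto
  define D where "D = (\<lambda>x y. real (the_enat (gdist w x y)))"
  have hd0: "f y0 - f x0 = real d0"
  proof -
    have "gdist w y0 x0 = enat d0" using gd gdist_sym[OF mg] by metis
    then show ?thesis using fy d0 by (simp add: grad_def)
  qed
  have hlip: "f x - f y \<ge> - D x y" if hx: "x \<in> ball1 w x0" and hy: "y \<in> ball1 w y0" for x y
  proof -
    obtain n where n: "gdist w x y = enat n" using ball_dist[OF mg gd hx hy] by blast
    have "f y - f x \<le> real n" using lip[OF mg _ n] gs by simp
    then show ?thesis using n by (simp add: D_def)
  qed
  have L1: "laplacian w m f x0 = (\<Sum>p\<in>B. \<rho> (fst p) (snd p) * (f (fst p) - f x0))"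
  proof -
    have "laplacian w m f x0 = (\<Sum>x\<in>A. qw w m x0 x * (f x - f x0))"
      unfolding laplacian_def A_def ..
    also have "\<dots> = (\<Sum>x\<in>A. (\<Sum>y\<in>ball1 w y0. \<rho> x y) * (f x - f x0))"
      using row by simp
    also have "\<dots> = (\<Sum>x\<in>A. \<Sum>y\<in>ball1 w y0. \<rho> x y * (f x - f x0))"
      by (simp add: sum_distrib_right)
    also have "\<dots> = (\<Sum>x\<in>ball1 w x0. \<Sum>y\<in>ball1 w y0. \<rho> x y * (f x - f x0))"
      unfolding B0 using fA nA by simp
    also have "\<dots> = (\<Sum>p\<in>B. \<rho> (fst p) (snd p) * (f (fst p) - f x0))"
      unfolding B_def by (simp add: sum.cartesian_product split_beta)
    finally show ?thesis .
  qed
  have L2: "laplacian w m f y0 = (\<Sum>p\<in>B. \<rho> (fst p) (snd p) * (f (snd p) - f y0))"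
  proof -
    have "laplacian w m f y0 = (\<Sum>y\<in>A'. qw w m y0 y * (f y - f y0))"
      unfolding laplacian_def A'_def ..
    also have "\<dots> = (\<Sum>y\<in>A'. (\<Sum>x\<in>ball1 w x0. \<rho> x y) * (f y - f y0))"
      using col by simp
    also have "\<dots> = (\<Sum>y\<in>A'. \<Sum>x\<in>ball1 w x0. \<rho> x y * (f y - f y0))"
      by (simp add: sum_distrib_right)
    also have "\<dots> = (\<Sum>y\<in>ball1 w y0. \<Sum>x\<in>ball1 w x0. \<rho> x y * (f y - f y0))"
      unfolding B0' using fA nA by simp
    also have "\<dots> = (\<Sum>x\<in>ball1 w x0. \<Sum>y\<in>ball1 w y0. \<rho> x y * (f y - f y0))"
      by (rule sum.swap)
    also have "\<dots> = (\<Sum>p\<in>B. \<rho> (fst p) (snd p) * (f (snd p) - f y0))"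
      unfolding B_def by (simp add: sum.cartesian_product split_beta)
    finally show ?thesis .
  qed
  have "laplacian w m f x0 - laplacian w m f y0 =
      (\<Sum>p\<in>B. \<rho> (fst p) (snd p) * ((f (fst p) - f x0) - (f (snd p) - f y0)))"
    unfolding L1 L2 by (simp add: sum_subtractf right_diff_distrib)
  also have "\<dots> \<ge> (\<Sum>p\<in>B. \<rho> (fst p) (snd p) * (real d0 - D (fst p) (snd p)))"
  proof (rule sum_mono)
    fix p assume p: "p \<in> B"
    then have px: "fst p \<in> ball1 w x0" and py: "snd p \<in> ball1 w y0" unfolding B_def by auto
    have "real d0 - D (fst p) (snd p) \<le> (f (fst p) - f x0) - (f (snd p) - f y0)"
      using hlip[OF px py] hd0 by simp
    then show "\<rho> (fst p) (snd p) * (real d0 - D (fst p) (snd p))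
        \<le> \<rho> (fst p) (snd p) * ((f (fst p) - f x0) - (f (snd p) - f y0))"
      using nn[OF px py] by (rule mult_left_mono)
  qed
  finally have ge: "(\<Sum>p\<in>B. \<rho> (fst p) (snd p) * (real d0 - D (fst p) (snd p)))
      \<le> laplacian w m f x0 - laplacian w m f y0" .
  have pv: "real d0 * plan_value w x0 y0 \<rho> = (\<Sum>p\<in>B. \<rho> (fst p) (snd p) * (real d0 - D (fst p) (snd p)))"
    unfolding plan_value_def B_def[symmetric] gd D_def sum_distrib_left
    using d0 by (intro sum.cong) (auto simp: field_simps)
  have "grad w (laplacian w m f) x0 y0 = (laplacian w m f x0 - laplacian w m f y0) / real d0"
    by (simp add: grad_def gd)
  then have "real d0 * grad w (laplacian w m f) x0 y0 = laplacian w m f x0 - laplacian w m f y0"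
    using d0 by simp
  then have "real d0 * plan_value w x0 y0 \<rho> \<le> real d0 * grad w (laplacian w m f) x0 y0"
    using ge pv by simp
  then show ?thesis using d0 by simp
qed

lemma compact_Pi_UNIV:
  assumes "\<And>i. compact (S i)"
  shows "compact (Pi UNIV S :: ('b \<Rightarrow> 'c::topological_space) set)"
proof -
  have "compactin (product_topology (\<lambda>i. euclidean) UNIV) (Pi\<^sub>E UNIV S)"
    using assms by (simp add: compactin_PiE)
  then show ?thesis by (simp add: euclidean_product_topology PiE_UNIV_domain)
qed

lemma cont_eval [continuous_intros]:
  "continuous_on S (\<lambda>\<rho>::'a \<Rightarrow> 'b \<Rightarrow> 'c::topological_space. \<rho> a b)"
proof -
  have c1: "continuous_on UNIV (\<lambda>\<rho>::'a \<Rightarrow> 'b \<Rightarrow> 'c. \<rho> a)"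
    by (rule continuous_on_product_coordinates)
  have c2: "continuous_on UNIV (\<lambda>g::'b \<Rightarrow> 'c. g b)"
    by (rule continuous_on_product_coordinates)
  have "continuous_on UNIV ((\<lambda>g::'b \<Rightarrow> 'c. g b) \<circ> (\<lambda>\<rho>::'a \<Rightarrow> 'b \<Rightarrow> 'c. \<rho> a))"
    by (rule continuous_on_compose[OF c1 continuous_on_subset[OF c2]]) auto
  then have "continuous_on UNIV (\<lambda>\<rho>::'a \<Rightarrow> 'b \<Rightarrow> 'c. \<rho> a b)" by (simp add: o_def)
  then show ?thesis by (rule continuous_on_subset) auto
qed

lemma qw_nonneg: "measured_graph w m \<Longrightarrow> 0 \<le> qw w m x y"
  unfolding measured_graph_def qw_def by (simp add: less_imp_le)

lemma exists_optimal:
  assumes mg: "measured_graph w m" and lf: "locally_finite w"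
    and gd: "gdist w x0 y0 = enat d0" and d0: "d0 > 0"
  shows "\<exists>\<rho>. optimal_plan w m x0 y0 \<rho>"
proof -
  define A where "A = {y. adj w x0 y}"
  define A' where "A' = {y. adj w y0 y}"
  define B0 where "B0 = ball1 w x0"
  define B0' where "B0' = ball1 w y0"
  define B where "B = B0 \<times> B0'"
  have B0: "B0 = insert x0 A" unfolding A_def B0_def by (rule ball1_eq[OF mg])
  have B0': "B0' = insert y0 A'" unfolding A'_def B0'_def by (rule ball1_eq[OF mg])
  have fA: "finite A" "finite A'" using lf unfolding A_def A'_def locally_finite_def by auto
  have fB: "finite B0" "finite B0'" using fA B0 B0' by auto
  have nA: "x0 \<notin> A" "y0 \<notin> A'" unfolding A_def A'_def using adj_irrefl[OF mg] by auto
  have S0: "sphere1 w x0 = A" "sphere1 w y0 = A'" unfolding A_def A'_def using sphere1_eq[OF mg] by auto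
  define M where "M = (\<Sum>x\<in>A. qw w m x0 x) + (\<Sum>y\<in>A'. qw w m y0 y)"
  have qn: "\<And>a b. 0 \<le> qw w m a b" using qw_nonneg[OF mg] by blast
  have M1: "qw w m x0 x \<le> M" if "x \<in> A" for x
  proof -
    have "qw w m x0 x \<le> (\<Sum>x\<in>A. qw w m x0 x)" using fA that qn by (intro member_le_sum) auto
    moreover have "0 \<le> (\<Sum>y\<in>A'. qw w m y0 y)" using qn by (intro sum_nonneg) auto
    ultimately show ?thesis unfolding M_def by simp
  qed
  have M2: "qw w m y0 y \<le> M" if "y \<in> A'" for y
  proof -
    have "qw w m y0 y \<le> (\<Sum>y\<in>A'. qw w m y0 y)" using fA that qn by (intro member_le_sum) auto
    moreover have "0 \<le> (\<Sum>x\<in>A. qw w m x0 x)" using qn by (intro sum_nonneg) auto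
    ultimately show ?thesis unfolding M_def by simp
  qed
  have M0: "0 \<le> M" unfolding M_def using qn by (intro add_nonneg_nonneg sum_nonneg) auto
  define I where "I = (\<lambda>x y. if (x, y) \<in> B \<and> (x, y) \<noteq> (x0, y0) then {0..M} else {0::real})"
  define Bx where "Bx = Pi UNIV (\<lambda>x. Pi UNIV (\<lambda>y. I x y))"
  define C where "C = {\<rho>::'a \<Rightarrow> 'a \<Rightarrow> real. (\<forall>x. x \<in> A \<longrightarrow> (\<Sum>y\<in>B0'. \<rho> x y) = qw w m x0 x) \<and>
       (\<forall>y. y \<in> A' \<longrightarrow> (\<Sum>x\<in>B0. \<rho> x y) = qw w m y0 y)}"
  define K where "K = Bx \<inter> C"
  have cBx: "compact Bx" unfolding Bx_def I_def
    by (intro compact_Pi_UNIV) auto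
  have clC: "closed C" unfolding C_def
  proof (intro closed_Collect_conj closed_Collect_all)
    fix x
    show "closed {\<rho>::'a \<Rightarrow> 'a \<Rightarrow> real. x \<in> A \<longrightarrow> (\<Sum>y\<in>B0'. \<rho> x y) = qw w m x0 x}"
    proof (cases "x \<in> A")
      case True
      then show ?thesis by (simp, intro closed_Collect_eq continuous_intros)
    qed simp
  next
    fix y
    show "closed {\<rho>::'a \<Rightarrow> 'a \<Rightarrow> real. y \<in> A' \<longrightarrow> (\<Sum>x\<in>B0. \<rho> x y) = qw w m y0 y}"
    proof (cases "y \<in> A'")
      case True
      then show ?thesis by (simp, intro closed_Collect_eq continuous_intros)
    qed simp
  qed
  have cK: "compact K" unfolding K_def using cBx clC by (rule compact_Int_closed)
  define \<rho>s where "\<rho>s = (\<lambda>x y. if y = y0 \<and> x \<in> A then qw w m x0 x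
      else if x = x0 \<and> y \<in> A' then qw w m y0 y else 0)"
  have "\<rho>s \<in> K"
  proof -
    have "\<rho>s \<in> Bx" unfolding Bx_def I_def \<rho>s_def B_def using M0 M1 M2 qn nA B0 B0'
      by (auto simp: Pi_iff)
    moreover have "\<rho>s \<in> C" unfolding C_def
    proof (intro CollectI conjI allI impI)
      fix x assume x: "x \<in> A"
      then have "x \<noteq> x0" using nA by auto
      then have "(\<Sum>y\<in>B0'. \<rho>s x y) = (\<Sum>y\<in>B0'. if y = y0 then qw w m x0 x else 0)"
        unfolding \<rho>s_def using x by (intro sum.cong) auto
      also have "\<dots> = qw w m x0 x" using fB B0' by simp
      finally show "(\<Sum>y\<in>B0'. \<rho>s x y) = qw w m x0 x" .
    next
      fix y assume y: "y \<in> A'"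
      then have "y \<noteq> y0" using nA by auto
      then have "(\<Sum>x\<in>B0. \<rho>s x y) = (\<Sum>x\<in>B0. if x = x0 then qw w m y0 y else 0)"
        unfolding \<rho>s_def using y by (intro sum.cong) auto
      also have "\<dots> = qw w m y0 y" using fB B0 by simp
      finally show "(\<Sum>x\<in>B0. \<rho>s x y) = qw w m y0 y" .
    qed
    ultimately show ?thesis unfolding K_def by blast
  qed
  then have Kne: "K \<noteq> {}" by blast
  have cpv: "continuous_on K (plan_value w x0 y0)"
    unfolding plan_value_def by (intro continuous_intros)
  obtain \<rho> where \<rho>K: "\<rho> \<in> K" and \<rho>max: "\<And>\<sigma>. \<sigma> \<in> K \<Longrightarrow> plan_value w x0 y0 \<sigma> \<le> plan_value w x0 y0 \<rho>"
    using continuous_attains_sup[OF cK Kne cpv] by blast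
  have Kplan: "transport_plan w m x0 y0 \<sigma>" if s: "\<sigma> \<in> K" for \<sigma>
  proof -
    have mem: "\<sigma> x y \<in> I x y" for x y using s unfolding K_def Bx_def by auto
    have "0 \<le> \<sigma> x y" for x y using mem[of x y] unfolding I_def by (auto split: if_splits)
    moreover have "\<sigma> \<in> C" using s unfolding K_def by blast
    ultimately show ?thesis unfolding transport_plan_def C_def S0 B0_def B0'_def by blast
  qed
  have "plan_value w x0 y0 \<sigma> \<le> plan_value w x0 y0 \<rho>" if tp: "transport_plan w m x0 y0 \<sigma>" for \<sigma>
  proof -
    have nn: "\<And>x y. x \<in> B0 \<Longrightarrow> y \<in> B0' \<Longrightarrow> 0 \<le> \<sigma> x y"
      using tp unfolding transport_plan_def B0_def B0'_def by blast
    have row: "\<And>x. x \<in> A \<Longrightarrow> (\<Sum>y\<in>B0'. \<sigma> x y) = qw w m x0 x"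
      using tp S0 unfolding transport_plan_def B0'_def by blast
    have col: "\<And>y. y \<in> A' \<Longrightarrow> (\<Sum>x\<in>B0. \<sigma> x y) = qw w m y0 y"
      using tp S0 unfolding transport_plan_def B0_def by blast
    define \<sigma>0 where "\<sigma>0 = (\<lambda>x y. if (x, y) \<in> B \<and> (x, y) \<noteq> (x0, y0) then \<sigma> x y else 0)"
    have bnd: "\<sigma> x y \<le> M" if xy: "(x, y) \<in> B" "(x, y) \<noteq> (x0, y0)" for x y
    proof (cases "x = x0")
      case False
      then have x: "x \<in> A" using xy B0 unfolding B_def by auto
      have "\<sigma> x y \<le> (\<Sum>y\<in>B0'. \<sigma> x y)"
        using xy fB nn x B0 unfolding B_def by (intro member_le_sum) auto
      then show ?thesis using row[OF x] M1[OF x] by simp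
    next
      case True
      then have y: "y \<in> A'" using xy B0' unfolding B_def by auto
      have "\<sigma> x y \<le> (\<Sum>x\<in>B0. \<sigma> x y)"
        using xy fB nn y B0' unfolding B_def by (intro member_le_sum) auto
      then show ?thesis using col[OF y] M2[OF y] by simp
    qed
    have "\<sigma>0 \<in> Bx" unfolding Bx_def I_def \<sigma>0_def using bnd nn unfolding B_def
      by (auto simp: Pi_iff)
    moreover have "\<sigma>0 \<in> C" unfolding C_def
    proof (intro CollectI conjI allI impI)
      fix x assume x: "x \<in> A"
      then have "x \<noteq> x0" using nA by auto
      then have "(\<Sum>y\<in>B0'. \<sigma>0 x y) = (\<Sum>y\<in>B0'. \<sigma> x y)"
        unfolding \<sigma>0_def B_def using x B0 by (intro sum.cong) auto
      then show "(\<Sum>y\<in>B0'. \<sigma>0 x y) = qw w m x0 x" using row[OF x] by simp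
    next
      fix y assume y: "y \<in> A'"
      then have "y \<noteq> y0" using nA by auto
      then have "(\<Sum>x\<in>B0. \<sigma>0 x y) = (\<Sum>x\<in>B0. \<sigma> x y)"
        unfolding \<sigma>0_def B_def using y B0' by (intro sum.cong) auto
      then show "(\<Sum>x\<in>B0. \<sigma>0 x y) = qw w m y0 y" using col[OF y] by simp
    qed
    ultimately have "\<sigma>0 \<in> K" unfolding K_def by blast
    have "plan_value w x0 y0 \<sigma>0 = plan_value w x0 y0 \<sigma>"
      unfolding plan_value_def B0_def[symmetric] B0'_def[symmetric] B_def[symmetric]
      using d0 by (intro sum.cong) (auto simp: \<sigma>0_def gd)
    then show ?thesis using \<rho>max[OF \<open>\<sigma>0 \<in> K\<close>] by simp
  qed
  then show ?thesis using Kplan[OF \<rho>K] unfolding optimal_plan_def by blast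
qed

lemma sum_if_eq': "finite S \<Longrightarrow> a \<in> S \<Longrightarrow> (\<Sum>y\<in>S. if y = a then c else 0) = c"
  by (simp add: sum.delta')

lemma sum_if_mem:
  assumes "finite S" "A \<subseteq> S"
  shows "(\<Sum>y\<in>S. if y \<in> A then g y else 0) = (\<Sum>y\<in>A. g y)"
proof -
  have "(\<Sum>y\<in>S. if y \<in> A then g y else 0) = sum g (S \<inter> A)"
    by (simp add: sum.inter_restrict assms(1))
  moreover have "S \<inter> A = A" using assms(2) by blast
  ultimately show ?thesis by simp
qed

lemma move:
  assumes mg: "measured_graph w m" and lf: "locally_finite w"
    and gd: "gdist w x0 y0 = enat d0" and d0: "d0 > 0"
    and tp: "transport_plan w m x0 y0 \<sigma>" and xs: "adj w x0 xs"
    and d1: "gdist w xs y0 = enat d1" "d1 + 1 \<le> d0"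
  shows "\<exists>\<sigma>'. transport_plan w m x0 y0 \<sigma>' \<and> plan_value w x0 y0 \<sigma> \<le> plan_value w x0 y0 \<sigma>'
     \<and> \<sigma>' xs y0 = qw w m x0 xs"
proof -
  define A where "A = {y. adj w x0 y}"
  define A' where "A' = {y. adj w y0 y}"
  define B0 where "B0 = ball1 w x0"
  define B0' where "B0' = ball1 w y0"
  define B where "B = B0 \<times> B0'"
  have B0: "B0 = insert x0 A" unfolding A_def B0_def by (rule ball1_eq[OF mg])
  have B0': "B0' = insert y0 A'" unfolding A'_def B0'_def by (rule ball1_eq[OF mg])
  have fA: "finite A" "finite A'" using lf unfolding A_def A'_def locally_finite_def by auto
  have fB: "finite B0" "finite B0'" "finite B" using fA B0 B0' B_def by auto
  have nA: "x0 \<notin> A" "y0 \<notin> A'" unfolding A_def A'_def using adj_irrefl[OF mg] by auto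
  have S0: "sphere1 w x0 = A" "sphere1 w y0 = A'" unfolding A_def A'_def using sphere1_eq[OF mg] by auto
  have xsA: "xs \<in> A" using xs unfolding A_def by simp
  have xsx0: "xs \<noteq> x0" using xsA nA by auto
  have nn: "\<And>x y. x \<in> B0 \<Longrightarrow> y \<in> B0' \<Longrightarrow> 0 \<le> \<sigma> x y"
    using tp unfolding transport_plan_def B0_def B0'_def by blast
  have row: "\<And>x. x \<in> A \<Longrightarrow> (\<Sum>y\<in>B0'. \<sigma> x y) = qw w m x0 x"
    using tp S0 unfolding transport_plan_def B0'_def by blast
  have col: "\<And>y. y \<in> A' \<Longrightarrow> (\<Sum>x\<in>B0. \<sigma> x y) = qw w m y0 y"
    using tp S0 unfolding transport_plan_def B0_def by blast
  define T where "T = (\<Sum>y\<in>A'. \<sigma> xs y)"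
  have T0: "0 \<le> T" unfolding T_def using nn B0 B0' xsA by (intro sum_nonneg) auto
  define e1 where "e1 = (\<lambda>x y. if x = xs \<and> y = y0 then T else 0)"
  define e2 where "e2 = (\<lambda>x y. if x = x0 \<and> y \<in> A' then \<sigma> xs y else 0)"
  define e3 where "e3 = (\<lambda>x y. if x = xs \<and> y \<in> A' then \<sigma> xs y else 0)"
  define \<sigma>' where "\<sigma>' = (\<lambda>x y. \<sigma> x y + e1 x y + e2 x y - e3 x y)"
  have rowxs: "(\<Sum>y\<in>B0'. \<sigma> xs y) = \<sigma> xs y0 + T"
    unfolding B0' T_def using fA nA by simp
  have val: "\<sigma>' xs y0 = qw w m x0 xs"
    unfolding \<sigma>'_def e1_def e2_def e3_def using xsx0 nA rowxs row[OF xsA] by simp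
  have se1: "(\<Sum>y\<in>B0'. e1 x y) = (if x = xs then T else 0)" for x
    unfolding e1_def using fB B0' by (cases "x = xs") (simp_all add: sum.delta')
  have se3: "(\<Sum>y\<in>B0'. e3 x y) = (if x = xs then T else 0)" for x
    unfolding e3_def T_def using fB B0' by (cases "x = xs") (simp_all add: sum_if_mem subset_insertI)
  have se2r: "(\<Sum>y\<in>B0'. e2 x y) = 0" if "x \<noteq> x0" for x
    unfolding e2_def using that by simp
  have se1c: "(\<Sum>x\<in>B0. e1 x y) = 0" if "y \<noteq> y0" for y
    unfolding e1_def using that by simp
  have se2c: "(\<Sum>x\<in>B0. e2 x y) = (if y \<in> A' then \<sigma> xs y else 0)" for y
    unfolding e2_def using fB B0 by (cases "y \<in> A'") (simp_all add: sum.delta')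
  have se3c: "(\<Sum>x\<in>B0. e3 x y) = (if y \<in> A' then \<sigma> xs y else 0)" for y
    unfolding e3_def using fB B0 xsA by (cases "y \<in> A'") (simp_all add: sum.delta')
  have tp': "transport_plan w m x0 y0 \<sigma>'"
    unfolding transport_plan_def S0
  proof (intro conjI ballI)
    fix x y assume x: "x \<in> ball1 w x0" and y: "y \<in> ball1 w y0"
    show "0 \<le> \<sigma>' x y"
    proof (cases "x = xs \<and> y \<in> A'")
      case True
      then show ?thesis unfolding \<sigma>'_def e1_def e2_def e3_def using xsx0 nA by auto
    next
      case False
      have "0 \<le> \<sigma> x y" using nn x y B0_def B0'_def by blast
      moreover have "0 \<le> e1 x y" unfolding e1_def using T0 by simp
      moreover have "0 \<le> e2 x y" unfolding e2_def using nn xsA B0 B0' by auto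
      moreover have "e3 x y = 0" unfolding e3_def using False by auto
      ultimately show ?thesis unfolding \<sigma>'_def by simp
    qed
  next
    fix x assume x: "x \<in> A"
    then have "x \<noteq> x0" using nA by auto
    have "(\<Sum>y\<in>ball1 w y0. \<sigma>' x y) = (\<Sum>y\<in>B0'. \<sigma> x y) + (\<Sum>y\<in>B0'. e1 x y)
        + (\<Sum>y\<in>B0'. e2 x y) - (\<Sum>y\<in>B0'. e3 x y)"
      unfolding \<sigma>'_def B0'_def[symmetric] by (simp add: sum.distrib sum_subtractf)
    also have "\<dots> = qw w m x0 x" using se1 se3 se2r[OF \<open>x \<noteq> x0\<close>] row[OF x] by simp
    finally show "(\<Sum>y\<in>ball1 w y0. \<sigma>' x y) = qw w m x0 x" .
  next
    fix y assume y: "y \<in> A'"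
    then have "y \<noteq> y0" using nA by auto
    have "(\<Sum>x\<in>ball1 w x0. \<sigma>' x y) = (\<Sum>x\<in>B0. \<sigma> x y) + (\<Sum>x\<in>B0. e1 x y)
        + (\<Sum>x\<in>B0. e2 x y) - (\<Sum>x\<in>B0. e3 x y)"
      unfolding \<sigma>'_def B0_def[symmetric] by (simp add: sum.distrib sum_subtractf)
    also have "\<dots> = qw w m y0 y" using se2c se3c se1c[OF \<open>y \<noteq> y0\<close>] col[OF y] by simp
    finally show "(\<Sum>x\<in>ball1 w x0. \<sigma>' x y) = qw w m y0 y" .
  qed
  define c where "c = (\<lambda>x y. 1 - real (the_enat (gdist w x y)) / real d0)"
  have pvdef: "plan_value w x0 y0 \<tau> = (\<Sum>p\<in>B. \<tau> (fst p) (snd p) * c (fst p) (snd p))" for \<tau>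
    unfolding plan_value_def c_def B_def B0_def B0'_def gd by simp
  have iter: "(\<Sum>p\<in>B. g (fst p) (snd p)) = (\<Sum>x\<in>B0. \<Sum>y\<in>B0'. g x y)" for g :: "'a \<Rightarrow> 'a \<Rightarrow> real"
    unfolding B_def by (simp add: sum.cartesian_product split_beta)
  have p1: "(\<Sum>p\<in>B. e1 (fst p) (snd p) * c (fst p) (snd p)) = T * c xs y0"
  proof -
    have "(\<Sum>p\<in>B. e1 (fst p) (snd p) * c (fst p) (snd p)) = (\<Sum>p\<in>B. if p = (xs, y0) then T * c xs y0 else 0)"
      unfolding e1_def by (intro sum.cong) auto
    also have "\<dots> = T * c xs y0" using fB xsA B0 B0' unfolding B_def by (simp add: sum.delta')
    finally show ?thesis .
  qed
  have p2: "(\<Sum>p\<in>B. e2 (fst p) (snd p) * c (fst p) (snd p)) = (\<Sum>y\<in>A'. \<sigma> xs y * c x0 y)"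
  proof -
    have "(\<Sum>p\<in>B. e2 (fst p) (snd p) * c (fst p) (snd p)) = (\<Sum>x\<in>B0. \<Sum>y\<in>B0'. e2 x y * c x y)"
      by (rule iter)
    also have "\<dots> = (\<Sum>x\<in>B0. if x = x0 then (\<Sum>y\<in>B0'. if y \<in> A' then \<sigma> xs y * c x0 y else 0) else 0)"
      unfolding e2_def by (intro sum.cong) (auto intro!: sum.cong)
    also have "\<dots> = (\<Sum>y\<in>A'. \<sigma> xs y * c x0 y)"
      using fB B0 B0' by (simp add: sum.delta' sum_if_mem subset_insertI)
    finally show ?thesis .
  qed
  have p3: "(\<Sum>p\<in>B. e3 (fst p) (snd p) * c (fst p) (snd p)) = (\<Sum>y\<in>A'. \<sigma> xs y * c xs y)"
  proof -
    have "(\<Sum>p\<in>B. e3 (fst p) (snd p) * c (fst p) (snd p)) = (\<Sum>x\<in>B0. \<Sum>y\<in>B0'. e3 x y * c x y)"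
      by (rule iter)
    also have "\<dots> = (\<Sum>x\<in>B0. if x = xs then (\<Sum>y\<in>B0'. if y \<in> A' then \<sigma> xs y * c xs y else 0) else 0)"
      unfolding e3_def by (intro sum.cong) (auto intro!: sum.cong)
    also have "\<dots> = (\<Sum>y\<in>A'. \<sigma> xs y * c xs y)"
      using fB B0 B0' xsA by (simp add: sum.delta' sum_if_mem subset_insertI)
    finally show ?thesis .
  qed
  have "plan_value w x0 y0 \<sigma>' = plan_value w x0 y0 \<sigma> + (\<Sum>p\<in>B. e1 (fst p) (snd p) * c (fst p) (snd p))
      + (\<Sum>p\<in>B. e2 (fst p) (snd p) * c (fst p) (snd p)) - (\<Sum>p\<in>B. e3 (fst p) (snd p) * c (fst p) (snd p))"
    unfolding pvdef \<sigma>'_def by (simp add: sum.distrib sum_subtractf algebra_simps)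
  also have "\<dots> = plan_value w x0 y0 \<sigma> + (\<Sum>y\<in>A'. \<sigma> xs y * (c xs y0 + c x0 y - c xs y))"
  proof -
    have a: "T * c xs y0 = (\<Sum>y\<in>A'. \<sigma> xs y * c xs y0)" unfolding T_def by (simp add: sum_distrib_right)
    have b: "(\<Sum>y\<in>A'. \<sigma> xs y * (c xs y0 + c x0 y - c xs y)) = (\<Sum>y\<in>A'. \<sigma> xs y * c xs y0)
       + (\<Sum>y\<in>A'. \<sigma> xs y * c x0 y) - (\<Sum>y\<in>A'. \<sigma> xs y * c xs y)"
      by (simp add: sum.distrib sum_subtractf distrib_left right_diff_distrib)
    show ?thesis unfolding p1 p2 p3 a b by simp
  qed
  also have "\<dots> \<ge> plan_value w x0 y0 \<sigma>"
  proof -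
    have "0 \<le> (\<Sum>y\<in>A'. \<sigma> xs y * (c xs y0 + c x0 y - c xs y))"
    proof (intro sum_nonneg mult_nonneg_nonneg)
      fix y assume y: "y \<in> A'"
      show "0 \<le> \<sigma> xs y" using nn xsA y B0 B0' by auto
      have xsB: "xs \<in> ball1 w x0" and yB: "y \<in> ball1 w y0" and x0B: "x0 \<in> ball1 w x0"
        using xsA y B0 B0' B0_def B0'_def by auto
      obtain n where n: "gdist w xs y = enat n" using ball_dist[OF mg gd xsB yB] by blast
      obtain n' where n': "gdist w x0 y = enat n'" using ball_dist[OF mg gd x0B yB] by blast
      have "gdist w x0 xs = enat 1" using gdist_one_iff[OF mg] xs by (simp add: one_enat_def)
      from gdist_trans[OF this n] n' have "n' \<le> 1 + n" by simp
      then have "real d0 - real d1 - real n' + real n \<ge> 0" using d1(2) by simp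
      moreover have "c xs y0 + c x0 y - c xs y = (real d0 - real d1 - real n' + real n) / real d0"
        unfolding c_def using n n' d1(1) d0 by (simp add: diff_divide_distrib add_divide_distrib)
      ultimately show "0 \<le> c xs y0 + c x0 y - c xs y" by simp
    qed
    then show ?thesis by simp
  qed
  finally show ?thesis using tp' val by blast
qed

theorem lemma2p2:
  fixes w :: "'a::countable \<Rightarrow> 'a \<Rightarrow> real" and m :: "'a \<Rightarrow> real"
    and x0 y0 :: 'a and \<epsilon> :: real
  assumes "measured_graph w m" and "locally_finite w"
    and "x0 \<noteq> y0" and "gdist w x0 y0 < \<infinity>"
    and "\<epsilon> > 0"
    and "ereal (real (the_enat (gdist w x0 y0))) * ollivier w m x0 y0 \<le> ereal \<epsilon>"
  shows "\<exists>\<rho>. optimal_plan w m x0 y0 \<rho> \<and>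
    (\<Sum>p\<in>{p\<in>ball1 w x0 \<times> ball1 w y0. gdist w (fst p) (snd p) > gdist w x0 y0}.
        \<rho> (fst p) (snd p)) \<ge> (qmin w m - \<epsilon>) / 2"
proof -
  note mg = assms(1) and lf = assms(2)
  obtain d0 where gd: "gdist w x0 y0 = enat d0" using assms(4) by (cases "gdist w x0 y0") auto
  have d0: "d0 > 0"
  proof (rule ccontr)
    assume "\<not> d0 > 0"
    then have "(adj w ^^ 0) x0 y0" using gdist_path[OF gd] by simp
    with assms(3) show False by simp
  qed
  have "(adj w ^^ Suc (d0 - 1)) x0 y0" using gdist_path[OF gd] d0 by simp
  then obtain xs where xs: "adj w x0 xs" "(adj w ^^ (d0 - 1)) xs y0"
    using relpowp_Suc_D2 by metis
  obtain d1 where d1: "gdist w xs y0 = enat d1" "d1 \<le> d0 - 1"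
    using enat_le_ex[OF gdist_le[OF xs(2)]] by blast
  have d1': "d1 + 1 \<le> d0" using d1 d0 by simp
  obtain \<rho>0 where opt0: "optimal_plan w m x0 y0 \<rho>0" using exists_optimal[OF mg lf gd d0] by blast
  then have tp0: "transport_plan w m x0 y0 \<rho>0" unfolding optimal_plan_def by blast
  obtain \<rho> where tp: "transport_plan w m x0 y0 \<rho>" and ge0: "plan_value w x0 y0 \<rho>0 \<le> plan_value w x0 y0 \<rho>"
    and rxs: "\<rho> xs y0 = qw w m x0 xs"
    using move[OF mg lf gd d0 tp0 xs(1) d1(1) d1'] by blast
  have opt: "optimal_plan w m x0 y0 \<rho>"
    using opt0 tp ge0 unfolding optimal_plan_def by (meson order_trans)
  have "ereal (plan_value w x0 y0 \<rho>) \<le> ollivier w m x0 y0"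
    unfolding ollivier_def
  proof (rule Inf_greatest)
    fix z assume "z \<in> {ereal (grad w (laplacian w m f) x0 y0) | f. grad w f y0 x0 = 1 \<and> grad_sup w f = 1}"
    then obtain f where f: "z = ereal (grad w (laplacian w m f) x0 y0)" "grad w f y0 x0 = 1" "grad_sup w f = 1"
      by blast
    show "ereal (plan_value w x0 y0 \<rho>) \<le> z"
      unfolding f(1) using weak_duality[OF mg lf tp gd d0 f(2) f(3)] by simp
  qed
  then have "ereal (real d0) * ereal (plan_value w x0 y0 \<rho>) \<le> ereal (real d0) * ollivier w m x0 y0"
    by (rule ereal_mult_left_mono) simp
  also have "\<dots> \<le> ereal \<epsilon>" using assms(6) gd by simp
  finally have pve: "real d0 * plan_value w x0 y0 \<rho> \<le> \<epsilon>" by simp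
  define B where "B = ball1 w x0 \<times> ball1 w y0"
  define D where "D = (\<lambda>p. the_enat (gdist w (fst p) (snd p)))"
  have fB: "finite B" unfolding B_def using ball_finite[OF mg lf] by auto
  have Dp: "gdist w (fst p) (snd p) = enat (D p) \<and> D p \<le> d0 + 2" if hp: "p \<in> B" for p
  proof -
    have "fst p \<in> ball1 w x0" "snd p \<in> ball1 w y0" using hp unfolding B_def by auto
    then obtain n where "gdist w (fst p) (snd p) = enat n" "n \<le> d0 + 2"
      using ball_dist[OF mg gd, of "fst p" "snd p"] by blast
    then show ?thesis unfolding D_def by simp
  qed
  have nn: "0 \<le> \<rho> (fst p) (snd p)" if "p \<in> B" for p
    using tp that unfolding transport_plan_def B_def by auto
  have pv: "real d0 * plan_value w x0 y0 \<rho> = (\<Sum>p\<in>B. \<rho> (fst p) (snd p) * (real d0 - real (D p)))"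
    unfolding plan_value_def B_def[symmetric] gd D_def sum_distrib_left
    using d0 by (intro sum.cong) (auto simp: field_simps)
  have xsB: "(xs, y0) \<in> B" unfolding B_def using xs(1) ball1_eq[OF mg] by auto
  have Dxs: "D (xs, y0) = d1" unfolding D_def using d1 by simp
  define h where "h = (\<lambda>p. (if p = (xs, y0) then \<rho> (fst p) (snd p) else 0)
      - 2 * (if D p > d0 then \<rho> (fst p) (snd p) else 0))"
  have hle: "h p \<le> \<rho> (fst p) (snd p) * (real d0 - real (D p))" if p: "p \<in> B" for p
  proof (cases "p = (xs, y0)")
    case True
    then have "real d0 - real (D p) \<ge> 1" using Dxs d1' by simp
    then have "\<rho> (fst p) (snd p) * 1 \<le> \<rho> (fst p) (snd p) * (real d0 - real (D p))"
      using nn[OF p] by (rule mult_left_mono)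
    then show ?thesis unfolding h_def using True Dxs d1' by simp
  next
    case False
    show ?thesis
    proof (cases "D p > d0")
      case True
      have "real d0 - real (D p) \<ge> -2" using Dp[OF p] by simp
      then have "\<rho> (fst p) (snd p) * (-2) \<le> \<rho> (fst p) (snd p) * (real d0 - real (D p))"
        using nn[OF p] by (rule mult_left_mono)
      then show ?thesis unfolding h_def using True False by simp
    next
      case F2: False
      then have "0 \<le> \<rho> (fst p) (snd p) * (real d0 - real (D p))"
        using nn[OF p] by simp
      then show ?thesis unfolding h_def using F2 False by simp
    qed
  qed
  define L where "L = (\<Sum>p\<in>{p\<in>B. gdist w (fst p) (snd p) > gdist w x0 y0}. \<rho> (fst p) (snd p))"
  have setq: "{p\<in>B. gdist w (fst p) (snd p) > gdist w x0 y0} = {p\<in>B. D p > d0}"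
    using Dp gd by auto
  have sumh: "(\<Sum>p\<in>B. h p) = \<rho> xs y0 - 2 * L"
  proof -
    have "(\<Sum>p\<in>B. h p) = (\<Sum>p\<in>B. if p = (xs, y0) then \<rho> (fst p) (snd p) else 0)
        - 2 * (\<Sum>p\<in>B. if D p > d0 then \<rho> (fst p) (snd p) else 0)"
      unfolding h_def by (simp add: sum_subtractf sum_distrib_left)
    also have "(\<Sum>p\<in>B. if p = (xs, y0) then \<rho> (fst p) (snd p) else 0) = \<rho> xs y0"
      using fB xsB by (simp add: sum.delta')
    also have "(\<Sum>p\<in>B. if D p > d0 then \<rho> (fst p) (snd p) else 0) = L"
      unfolding L_def setq using fB by (simp add: sum.inter_filter)
    finally show ?thesis .
  qed
  have "\<rho> xs y0 - 2 * L \<le> real d0 * plan_value w x0 y0 \<rho>"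
    unfolding pv sumh[symmetric] using hle by (intro sum_mono) auto
  with pve have "\<rho> xs y0 - 2 * L \<le> \<epsilon>" by simp
  moreover have "qmin w m \<le> qw w m x0 xs"
    unfolding qmin_def
  proof (rule cInf_lower)
    show "qw w m x0 xs \<in> {qw w m x y |x y. adj w x y}" using xs(1) by blast
    show "bdd_below {qw w m x y |x y. adj w x y}"
      using qw_nonneg[OF mg] by (intro bdd_belowI[of _ 0]) auto
  qed
  ultimately have "(qmin w m - \<epsilon>) / 2 \<le> L" using rxs by simp
  then show ?thesis using opt unfolding L_def B_def by blast
qed
end
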